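(* Let $f:\mathbb{R}^n\times\mathbb{R}^m\to\mathbb{R}$ and $h:\mathbb{R}^m\to\mathbb{R}$. Let $U\subseteq\mathbb{R}^n$ be open and let $y:U\to\mathbb{R}^m$ satisfy $y(x)\in\operatorname{argmin}_{u\in\mathbb{R}^m} f(x,u)$ subject to $h(u)=0$ for every $x\in U$. Fix $x_0\in U$, write $y_0=y(x_0)$, and assume $f$ is twice continuously differentiable near $(x_0,y_0)$, $h$ is twice continuously differentiable near $y_0$, $y$ is continuous at $x_0$, and $D_Y h(y_0)\neq 0$. Let $$a=(D_Y h(y_0))^\top\in\mathbb{R}^m,\quad B=D^2_{XY}f(x_0,y_0)\in\mathbb{R}^{m\times n},\quad \lambda=\Big(\tfrac{\partial h}{\partial y_i}(y_0)\Big)^{-1}\tfrac{\partial f}{\partial y_i}(x_0,y_0)$$ for any index $i$ with $\frac{\partial h}{\partial y_i}(y_0)\neq 0$ (this value does not depend on the choice of $i$), and $H=D^2_{YY}f(x_0,y_0)-\lambda D^2_{YY}h(y_0)$. If $H$ is non-singular and $a^\top H^{-1}a\neq 0$, then $y$ is differentiable at $x_0$ and $$Dy(x_0)=\left(\frac{H^{-1}aa^\top H^{-1}}{a^\top H^{-1}a}-H^{-1}\right)B.$$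
   Context: Derivative conventions: Jacobians $Dg$ of $g:\mathbb{R}^n\to\mathbb{R}^k$ are $k\times n$ matrices; for scalar-valued functions they are row vectors. $D_X, D_Y$ are partial Jacobians with respect to the first/second argument; $D^2_{YY} f = D_Y (D_Y f)^{\top}$, $D^2_{XY} f = D_X (D_Y f)^{\top}\in\mathbb{R}^{m\times n}$. *)

theory Defs
  imports "HOL-Analysis.Analysis"
begin

definition C1_on :: "'a::real_normed_vector set \<Rightarrow> ('a \<Rightarrow> 'b::real_normed_vector) \<Rightarrow> bool" where
  "C1_on S g \<longleftrightarrow> (\<exists>g'. (\<forall>x\<in>S. (g has_derivative blinfun_apply (g' x)) (at x)) \<and> continuous_on S g')"

definition C2_on :: "'a::real_normed_vector set \<Rightarrow> ('a \<Rightarrow> 'b::real_normed_vector) \<Rightarrow> bool" where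
  "C2_on S g \<longleftrightarrow> (\<exists>g'. (\<forall>x\<in>S. (g has_derivative blinfun_apply (g' x)) (at x)) \<and> C1_on S g')"

definition C2_near :: "('a::real_normed_vector \<Rightarrow> 'b::real_normed_vector) \<Rightarrow> 'a \<Rightarrow> bool" where
  "C2_near g p \<longleftrightarrow> (\<exists>S. open S \<and> p \<in> S \<and> C2_on S g)"

definition grad :: "(real^'m \<Rightarrow> real) \<Rightarrow> real^'m \<Rightarrow> real^'m" where
  "grad g u = (\<chi> i. frechet_derivative g (at u) (axis i 1))"

definition outer :: "real^'m \<Rightarrow> real^'k \<Rightarrow> real^'k^'m" where
  "outer a b = (columnvector a :: real^1^'m) ** rowvector b"

end

theory Submission
  imports Defs
begin

lemma grad_works:
  fixes g :: "real^'m \<Rightarrow> real"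
  assumes "(g has_derivative D) (at u)"
  shows "grad g u = (\<chi> j. D (axis j 1))" and "D = (\<lambda>w. grad g u \<bullet> w)"
proof -
  have D: "D = frechet_derivative g (at u)" using frechet_derivative_at[OF assms] .
  show g: "grad g u = (\<chi> j. D (axis j 1))" unfolding grad_def D ..
  have lin: "linear D" using assms has_derivative_linear by blast
  show "D = (\<lambda>w. grad g u \<bullet> w)"
  proof
    fix w :: "real^'m"
    have "D w = D (\<Sum>j\<in>UNIV. w$j *\<^sub>R axis j 1)"
      using basis_expansion[of w] by (simp add: scalar_mult_eq_scaleR)
    also have "\<dots> = (\<Sum>j\<in>UNIV. w$j * D (axis j 1))"
      using lin by (simp add: linear_sum linear_scale)
    also have "\<dots> = grad g u \<bullet> w" unfolding g inner_vec_def by (simp add: mult.commute)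
    finally show "D w = grad g u \<bullet> w" .
  qed
qed

lemma outer_mult: "outer a b *v w = (b \<bullet> w) *\<^sub>R (a::real^'m)"
  by (simp add: outer_def vec_eq_iff matrix_vector_mult_def matrix_matrix_mult_def
      columnvector_def rowvector_def inner_vec_def sum_distrib_left sum_distrib_right algebra_simps)

lemma matrix_inv_right:
  fixes A :: "real^'n^'n"
  assumes "invertible A"
  shows "A ** matrix_inv A = mat 1" "matrix_inv A ** A = mat 1"
proof -
  have "\<exists>A'. A ** A' = mat 1 \<and> A' ** A = mat 1" using assms unfolding invertible_def by blast
  from someI_ex[OF this] show "A ** matrix_inv A = mat 1" "matrix_inv A ** A = mat 1"
    unfolding matrix_inv_def by auto
qed

lemma lagrange_dir:
  fixes \<phi> h :: "real^'m \<Rightarrow> real"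
  assumes dphi: "(\<phi> has_derivative (\<lambda>w. g \<bullet> w)) (at u0)"
    and dh: "(h has_derivative (\<lambda>w. a \<bullet> w)) (at u0)"
    and h0: "h u0 = 0" and ai: "a$i \<noteq> 0" and S: "open S" "u0 \<in> S" and hc: "continuous_on S h"
    and mn: "\<forall>u. h u = 0 \<longrightarrow> \<phi> u0 \<le> \<phi> u"
    and av: "a \<bullet> v = 0"
  shows "g \<bullet> v \<ge> 0"
proof (rule ccontr)
  assume "\<not> g \<bullet> v \<ge> 0"
  define c where "c = - (g \<bullet> v)"
  have c: "c > 0" using \<open>\<not> g \<bullet> v \<ge> 0\<close> c_def by simp
  define e :: "real^'m" where "e = axis i 1"
  define \<eta> where "\<eta> = c / (4 * (\<bar>g$i\<bar> + 1))"
  have eta: "\<eta> > 0" using c by (simp add: \<eta>_def)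
  have geta: "\<bar>g$i\<bar> * \<eta> \<le> c/4"
  proof -
    have "\<bar>g$i\<bar> * \<eta> = c/4 * (\<bar>g$i\<bar> / (\<bar>g$i\<bar> + 1))" by (simp add: \<eta>_def field_simps)
    also have "\<dots> \<le> c/4 * 1" using c by (intro mult_left_mono) auto
    finally show ?thesis by simp
  qed
  define N where "N = norm v + \<eta>"
  have N: "N > 0" using eta by (simp add: N_def add_nonneg_pos)
  define eh where "eh = \<bar>a$i\<bar> * \<eta> / (2*N)"
  have eh: "eh > 0" using ai eta N by (simp add: eh_def)
  obtain dh where dh0: "dh > 0" and dhp: "\<And>y. norm (y - u0) < dh \<Longrightarrow> \<bar>h y - h u0 - a \<bullet> (y - u0)\<bar> \<le> eh * norm (y - u0)"
    using dh eh unfolding has_derivative_at_alt by (metis real_norm_def)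
  define ep where "ep = c / (4*N)"
  have ep: "ep > 0" using c N by (simp add: ep_def)
  obtain dp where dp0: "dp > 0" and dpp: "\<And>y. norm (y - u0) < dp \<Longrightarrow> \<bar>\<phi> y - \<phi> u0 - g \<bullet> (y - u0)\<bar> \<le> ep * norm (y - u0)"
    using dphi ep unfolding has_derivative_at_alt by (metis real_norm_def)
  obtain r where r0: "r > 0" and rS: "ball u0 r \<subseteq> S" using S open_contains_ball by blast
  define t where "t = min dh (min dp r) / (2*N)"
  have t0: "t > 0" using dh0 dp0 r0 N by (simp add: t_def)
  have tN: "t * N < dh" "t * N < dp" "t * N < r"
    using dh0 dp0 r0 N by (auto simp: t_def)
  define p where "p = (\<lambda>s::real. u0 + t *\<^sub>R v + s *\<^sub>R e)"
  have np: "norm (p s - u0) \<le> t * N" if "\<bar>s\<bar> \<le> \<eta> * t" for s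
  proof -
    have "norm (p s - u0) \<le> norm (t *\<^sub>R v) + norm (s *\<^sub>R e)"
    proof -
      have "p s - u0 = t *\<^sub>R v + s *\<^sub>R e" by (simp add: p_def)
      then show ?thesis by (simp only: norm_triangle_ineq)
    qed
    also have "\<dots> = t * norm v + \<bar>s\<bar>" using t0 by (simp add: e_def)
    also have "\<dots> \<le> t * N" using that by (simp add: N_def algebra_simps)
    finally show ?thesis .
  qed
  have ap: "a \<bullet> (p s - u0) = s * a$i" for s
    by (simp add: p_def e_def inner_add_right av inner_axis)
  have gp: "g \<bullet> (p s - u0) = - t * c + s * g$i" for s
    by (simp add: p_def e_def inner_add_right c_def inner_axis)
  have hp: "\<bar>h (p s) - s * a$i\<bar> \<le> \<bar>a$i\<bar> * \<eta> * t / 2" if "\<bar>s\<bar> \<le> \<eta> * t" for s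
  proof -
    have "norm (p s - u0) < dh" using np[OF that] tN by linarith
    from dhp[OF this] have "\<bar>h (p s) - s * a$i\<bar> \<le> eh * norm (p s - u0)" by (simp add: ap h0)
    also have "\<dots> \<le> eh * (t * N)" using np[OF that] eh by (intro mult_left_mono) auto
    also have "\<dots> = \<bar>a$i\<bar> * \<eta> * t / 2" using N by (simp add: eh_def field_simps)
    finally show ?thesis .
  qed
  have cont: "continuous_on {-(\<eta>*t)..\<eta>*t} (\<lambda>s. h (p s))"
  proof (rule continuous_on_compose2[OF hc])
    show "continuous_on {-(\<eta>*t)..\<eta>*t} p" unfolding p_def by (intro continuous_intros)
    show "p ` {-(\<eta>*t)..\<eta>*t} \<subseteq> S"
    proof
      fix q assume "q \<in> p ` {-(\<eta>*t)..\<eta>*t}"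
      then obtain s where "s \<in> {-(\<eta>*t)..\<eta>*t}" "q = p s" by blast
      then have "\<bar>s\<bar> \<le> \<eta>*t" "q = p s" by auto
      with np tN have "norm (q - u0) < r" by fastforce
      then show "q \<in> S" using rS by (auto simp: dist_norm norm_minus_commute)
    qed
  qed
  have le: "-(\<eta>*t) \<le> \<eta>*t" using eta t0 by simp
  define K where "K = \<eta> * t * a$i"
  have h1: "\<bar>h (p (-(\<eta>*t))) + K\<bar> \<le> \<bar>K\<bar>/2"
    using hp[of "-(\<eta>*t)"] eta t0 by (simp add: K_def abs_mult mult_ac)
  have h2: "\<bar>h (p (\<eta>*t)) - K\<bar> \<le> \<bar>K\<bar>/2"
    using hp[of "\<eta>*t"] eta t0 by (simp add: K_def abs_mult mult_ac)
  obtain s where s: "\<bar>s\<bar> \<le> \<eta> * t" and hs: "h (p s) = 0"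
  proof (cases "a$i > 0")
    case True
    then have "K > 0" using eta t0 by (simp add: K_def)
    then have "h (p (-(\<eta>*t))) \<le> 0" "0 \<le> h (p (\<eta>*t))"
      using h1 h2 unfolding abs_le_iff by linarith+
    with IVT'[OF _ _ le cont] obtain s where "-(\<eta>*t) \<le> s" "s \<le> \<eta>*t" "h (p s) = 0" by blast
    then show ?thesis using that[of s] by auto
  next
    case False
    then have an: "a$i < 0" using ai by simp
    then have "K < 0" using eta t0 by (simp add: K_def mult_pos_neg)
    then have "h (p (\<eta>*t)) \<le> 0" "0 \<le> h (p (-(\<eta>*t)))"
      using h1 h2 unfolding abs_le_iff by linarith+
    with IVT2'[OF _ _ le cont] obtain s where "-(\<eta>*t) \<le> s" "s \<le> \<eta>*t" "h (p s) = 0" by blast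
    then show ?thesis using that[of s] by auto
  qed
  have "norm (p s - u0) < dp" using np[OF s] tN by linarith
  from dpp[OF this] have "\<phi> (p s) - \<phi> u0 \<le> - t * c + s * g$i + ep * norm (p s - u0)"
    by (simp add: gp)
  also have "ep * norm (p s - u0) \<le> ep * (t * N)" using np[OF s] ep by (intro mult_left_mono) auto
  also have "ep * (t * N) = c * t / 4" using N by (simp add: ep_def field_simps)
  also have "s * g$i \<le> \<bar>g$i\<bar> * \<eta> * t"
  proof -
    have "s * g$i \<le> \<bar>s\<bar> * \<bar>g$i\<bar>" by (metis abs_ge_self abs_mult)
    also have "\<dots> \<le> \<eta> * t * \<bar>g$i\<bar>" using s by (intro mult_right_mono) auto
    finally show ?thesis by (simp add: algebra_simps)
  qed
  also have "\<bar>g$i\<bar> * \<eta> * t \<le> c / 4 * t" using geta t0 by (intro mult_right_mono) auto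
  finally have "\<phi> (p s) - \<phi> u0 \<le> - t * c / 2" by (simp add: mult.commute)
  moreover have "\<phi> u0 \<le> \<phi> (p s)" using mn hs by blast
  moreover have "t * c > 0" using t0 c by simp
  ultimately show False by linarith
qed

lemma lagrange:
  fixes \<phi> h :: "real^'m \<Rightarrow> real"
  assumes dphi: "(\<phi> has_derivative (\<lambda>w. g \<bullet> w)) (at u0)"
    and dh: "(h has_derivative (\<lambda>w. a \<bullet> w)) (at u0)"
    and h0: "h u0 = 0" and ai: "a$i \<noteq> 0" and S: "open S" "u0 \<in> S" and hc: "continuous_on S h"
    and mn: "\<forall>u. h u = 0 \<longrightarrow> \<phi> u0 \<le> \<phi> u"
  shows "g = (g$i / a$i) *\<^sub>R a"
proof -
  have *: "g$j = (g$i / a$i) * a$j" for j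
  proof -
    define v :: "real^'m" where "v = axis j 1 - (a$j / a$i) *\<^sub>R axis i 1"
    have av: "a \<bullet> v = 0" using ai by (simp add: v_def inner_diff_right inner_axis)
    have av': "a \<bullet> (-v) = 0" using av by simp
    have "g \<bullet> v \<ge> 0" by (rule lagrange_dir[OF dphi dh h0 ai S hc mn av])
    moreover have "g \<bullet> (-v) \<ge> 0" by (rule lagrange_dir[OF dphi dh h0 ai S hc mn av'])
    ultimately have "g \<bullet> v = 0" by simp
    then show ?thesis using ai by (simp add: v_def inner_diff_right inner_axis field_simps)
  qed
  show ?thesis
  unfolding vec_eq_iff
  proof
    fix j
    from *[of j] show "g$j = ((g$i / a$i) *\<^sub>R a)$j" by (simp only: vector_scaleR_component real_scaleR_def)
  qed
qed


lemma implicit_diff: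
  fixes G :: "('a::euclidean_space \<times> 'b::euclidean_space) \<Rightarrow> 'c::euclidean_space" and z :: "'a \<Rightarrow> 'b"
  assumes dG: "(G has_derivative G') (at (x0, z x0))"
    and ev: "\<forall>\<^sub>F x in nhds x0. G (x, z x) = 0"
    and zc: "isCont z x0"
    and L: "linear L"
    and GL: "\<And>v. G' (v, L v) = 0"
    and inj: "\<And>w. G' (0, w) = 0 \<Longrightarrow> w = 0"
  shows "(z has_derivative L) (at x0)"
proof -
  have bl: "bounded_linear G'" using dG has_derivative_bounded_linear by blast
  have bl0: "bounded_linear (\<lambda>w. G' (0, w))"
    by (rule bounded_linear_compose[OF bl bounded_linear_Pair[OF bounded_linear_zero bounded_linear_ident]])
  obtain c where c: "c > 0" and cw: "\<And>w. c * norm w \<le> norm (G' (0, w))"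
    using injective_imp_isometric[of UNIV "\<lambda>w. G' (0, w)"] bl0 inj by auto
  have bL: "bounded_linear L" using L linear_conv_bounded_linear by blast
  obtain K where K: "K > 0" and KL: "\<And>v. norm (L v) \<le> norm v * K"
    using bounded_linear.pos_bounded[OF bL] by blast
  have G0: "G (x0, z x0) = 0" using eventually_nhds_x_imp_x[OF ev] by simp
  show ?thesis
    unfolding has_derivative_at_alt
  proof (intro conjI allI impI bL)
    fix e :: real assume e: "e > 0"
    define e' where "e' = min (c/2) (c*e/(2*(1+K)))"
    have e'0: "e' > 0" using c e K by (simp add: e'_def)
    have e'1a: "e' \<le> c/2" unfolding e'_def by (rule min.cobounded1)
    have "e' \<le> c*e/(2*(1+K))" unfolding e'_def by (rule min.cobounded2)
    then have "e' * (1+K) \<le> c*e/(2*(1+K)) * (1+K)" using K by (intro mult_right_mono) auto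
    also have "\<dots> = c*e/2" using K by (simp add: field_simps)
    finally have e'1b: "e' * (1+K) \<le> c*e/2" .
    note e'1 = e'1a e'1b
    obtain dG0 where dG0: "dG0 > 0" and dGp: "\<And>q. norm (q - (x0, z x0)) < dG0 \<Longrightarrow>
        norm (G q - G (x0, z x0) - G' (q - (x0, z x0))) \<le> e' * norm (q - (x0, z x0))"
      using dG e'0 unfolding has_derivative_at_alt by meson
    obtain d1 where d1: "d1 > 0" and d1p: "\<And>y. dist y x0 < d1 \<Longrightarrow> dist (z y) (z x0) < dG0/2"
      using zc dG0 unfolding continuous_at_eps_delta by (meson half_gt_zero)
    obtain d2 where d2: "d2 > 0" and d2p: "\<And>y. dist y x0 < d2 \<Longrightarrow> G (y, z y) = 0"
      using ev unfolding eventually_nhds_metric by blast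
    define d where "d = min (min d1 d2) (dG0/2)"
    show "\<exists>d>0. \<forall>y. norm (y - x0) < d \<longrightarrow> norm (z y - z x0 - L (y - x0)) \<le> e * norm (y - x0)"
    proof (intro exI[of _ d] conjI allI impI)
      show "d > 0" using d1 d2 dG0 by (simp add: d_def)
      fix y assume y: "norm (y - x0) < d"
      define dx where "dx = y - x0"
      define dz where "dz = z y - z x0"
      define ee where "ee = dz - L dx"
      have ndx: "norm dx < dG0/2" "dist y x0 < d1" "dist y x0 < d2"
        using y by (auto simp: d_def dx_def dist_norm)
      have ndz: "norm dz < dG0/2" using d1p[OF ndx(2)] by (simp add: dz_def dist_norm)
      have q: "(y, z y) - (x0, z x0) = (dx, dz)" by (simp add: dx_def dz_def)
      have nq: "norm (dx, dz) \<le> norm dx + norm dz" by (rule norm_Pair_le)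
      have "norm ((y, z y) - (x0, z x0)) < dG0" using nq ndx ndz q by simp
      from dGp[OF this] have "norm (G' (dx, dz)) \<le> e' * norm (dx, dz)"
        using G0 d2p[OF ndx(3)] q by simp
      also have "\<dots> \<le> e' * (norm dx + norm dz)" using nq e'0 by (intro mult_left_mono) auto
      finally have A: "norm (G' (dx, dz)) \<le> e' * (norm dx + norm dz)" .
      have "(dx, dz) = (dx, L dx) + (0, ee)" by (simp add: ee_def)
      then have "G' (dx, dz) = G' (dx, L dx) + G' (0, ee)"
        using linear_add[OF bounded_linear.linear[OF bl]] by metis
      then have B: "G' (dx, dz) = G' (0, ee)" using GL by simp
      have "norm dz \<le> norm (L dx) + norm ee"
        by (metis ee_def add_diff_cancel_left' diff_add_cancel norm_triangle_ineq)
      then have C: "norm dz \<le> norm dx * K + norm ee" using KL[of dx] by linarith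
      have "c * norm ee \<le> e' * (norm dx + norm dz)" using cw[of ee] A B by simp
      also have "\<dots> \<le> e' * (norm dx + norm dx * K + norm ee)" using C e'0 by (intro mult_left_mono) auto
      also have "\<dots> = e' * (1+K) * norm dx + e' * norm ee" by (simp add: algebra_simps)
      finally have D: "c * norm ee \<le> e' * (1+K) * norm dx + e' * norm ee" .
      have "e' * norm ee \<le> c/2 * norm ee" using e'1 by (intro mult_right_mono) auto
      moreover have "e' * (1+K) * norm dx \<le> c*e/2 * norm dx" using e'1 by (intro mult_right_mono) auto
      ultimately have "c/2 * norm ee \<le> c * e / 2 * norm dx" using D by linarith
      then have "c * norm ee \<le> c * (e * norm dx)" by (simp add: algebra_simps)
      then have "norm ee \<le> e * norm dx" using c by simp
      then show "norm (z y - z x0 - L (y - x0)) \<le> e * norm (y - x0)"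
        by (simp add: ee_def dz_def dx_def)
    qed
  qed
qed




lemma vec_sum_basis: "(v::real^'m) = (\<Sum>j\<in>UNIV. (v$j) *\<^sub>R axis j 1)"
  using basis_expansion[of v] by (simp add: scalar_mult_eq_scaleR)

lemma C2_grad_f:
  fixes f :: "real^'n \<Rightarrow> real^'m \<Rightarrow> real"
  assumes "C2_near (\<lambda>(x,u). f x u) p0"
  shows "\<exists>S Pd. open S \<and> p0 \<in> S \<and> (\<forall>x u. (x,u) \<in> S \<longrightarrow> (f x has_derivative (\<lambda>w. grad (f x) u \<bullet> w)) (at u))
     \<and> ((\<lambda>(x,u). grad (f x) u) has_derivative Pd) (at p0)"
proof -
  let ?F = "\<lambda>(x,u). f x u"
  obtain S F' F'' where S: "open S" "p0 \<in> S" and dF: "\<And>p. p \<in> S \<Longrightarrow> (?F has_derivative blinfun_apply (F' p)) (at p)"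
    and dF': "\<And>p. p \<in> S \<Longrightarrow> (F' has_derivative blinfun_apply (F'' p)) (at p)"
    using assms unfolding C2_near_def C2_on_def C1_on_def by blast
  have gx: "grad (f x) u $ j = blinfun_apply (F' (x,u)) (0, axis j 1)"
    and dfx: "(f x has_derivative (\<lambda>w. grad (f x) u \<bullet> w)) (at u)" if xu: "(x,u) \<in> S" for x u j
  proof -
    have "((\<lambda>u. ?F (x,u)) has_derivative (\<lambda>w. blinfun_apply (F' (x,u)) (0, w))) (at u)"
      using has_derivative_compose[OF has_derivative_Pair[OF has_derivative_const has_derivative_ident] dF[OF xu]]
      by simp
    then have d: "(f x has_derivative (\<lambda>w. blinfun_apply (F' (x,u)) (0, w))) (at u)" by simp
    from grad_works[OF d] show "grad (f x) u $ j = blinfun_apply (F' (x,u)) (0, axis j 1)"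
      and "(f x has_derivative (\<lambda>w. grad (f x) u \<bullet> w)) (at u)" using d by auto
  qed
  define Q where "Q = (\<lambda>p. \<Sum>j\<in>UNIV. blinfun_apply (F' p) (0, axis j 1) *\<^sub>R (axis j 1 :: real^'m))"
  have d1: "((\<lambda>p. blinfun_apply (F' p) (0, axis j 1)) has_derivative (\<lambda>h. blinfun_apply (F'' p0 h) (0, axis j 1))) (at p0)" for j
  proof -
    have "((\<lambda>p. blinfun_apply (F' p) (0, axis j 1)) has_derivative
        (\<lambda>h. blinfun_apply (F' p0) 0 + blinfun_apply (F'' p0 h) (0, axis j 1))) (at p0)"
      by (rule bounded_bilinear.FDERIV[OF bounded_bilinear_blinfun_apply dF'[OF S(2)] has_derivative_const])
    then show ?thesis by simp
  qed
  have dQ: "(Q has_derivative (\<lambda>h. \<Sum>j\<in>UNIV. blinfun_apply (F'' p0 h) (0, axis j 1) *\<^sub>R (axis j 1 :: real^'m))) (at p0)"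
    unfolding Q_def by (intro has_derivative_sum has_derivative_scaleR_left d1)
  have eqQ: "Q p = (\<lambda>(x,u). grad (f x) u) p" if "p \<in> S" for p
  proof -
    obtain x u where p: "p = (x,u)" by fastforce
    have "grad (f x) u = (\<Sum>j\<in>UNIV. (grad (f x) u $ j) *\<^sub>R (axis j 1 :: real^'m))" by (rule vec_sum_basis)
    also have "\<dots> = Q (x,u)" unfolding Q_def using gx[of x u] that p by simp
    finally show ?thesis unfolding p by simp
  qed
  have "((\<lambda>(x,u). grad (f x) u) has_derivative (\<lambda>h. \<Sum>j\<in>UNIV. blinfun_apply (F'' p0 h) (0, axis j 1) *\<^sub>R (axis j 1 :: real^'m))) (at p0)"
    by (rule has_derivative_transform_within_open[OF dQ S(1) S(2) eqQ])
  then show ?thesis using S dfx by blast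
qed

lemma C2_grad_h:
  fixes h :: "real^'m \<Rightarrow> real"
  assumes "C2_near h u0"
  shows "\<exists>S Hd. open S \<and> u0 \<in> S \<and> (\<forall>u\<in>S. (h has_derivative (\<lambda>w. grad h u \<bullet> w)) (at u))
     \<and> (grad h has_derivative Hd) (at u0)"
proof -
  obtain S F' F'' where S: "open S" "u0 \<in> S" and dF: "\<And>p. p \<in> S \<Longrightarrow> (h has_derivative blinfun_apply (F' p)) (at p)"
    and dF': "\<And>p. p \<in> S \<Longrightarrow> (F' has_derivative blinfun_apply (F'' p)) (at p)"
    using assms unfolding C2_near_def C2_on_def C1_on_def by blast
  have gx: "grad h u $ j = blinfun_apply (F' u) (axis j 1)"
    and dfx: "(h has_derivative (\<lambda>w. grad h u \<bullet> w)) (at u)" if xu: "u \<in> S" for u j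
  proof -
    have "grad h u = (\<chi> j. blinfun_apply (F' u) (axis j 1))" by (rule grad_works(1)[OF dF[OF xu]])
    then show "grad h u $ j = blinfun_apply (F' u) (axis j 1)" by simp
    show "(h has_derivative (\<lambda>w. grad h u \<bullet> w)) (at u)"
      using grad_works(2)[OF dF[OF xu]] dF[OF xu] by simp
  qed
  define Q where "Q = (\<lambda>p. \<Sum>j\<in>UNIV. blinfun_apply (F' p) (axis j 1) *\<^sub>R (axis j 1 :: real^'m))"
  have d1: "((\<lambda>p. blinfun_apply (F' p) (axis j 1)) has_derivative (\<lambda>h. blinfun_apply (F'' u0 h) (axis j 1))) (at u0)" for j
  proof -
    have "((\<lambda>p. blinfun_apply (F' p) (axis j 1)) has_derivative
        (\<lambda>h. blinfun_apply (F' u0) 0 + blinfun_apply (F'' u0 h) (axis j 1))) (at u0)"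
      by (rule bounded_bilinear.FDERIV[OF bounded_bilinear_blinfun_apply dF'[OF S(2)] has_derivative_const])
    then show ?thesis by simp
  qed
  have dQ: "(Q has_derivative (\<lambda>h. \<Sum>j\<in>UNIV. blinfun_apply (F'' u0 h) (axis j 1) *\<^sub>R (axis j 1 :: real^'m))) (at u0)"
    unfolding Q_def by (intro has_derivative_sum has_derivative_scaleR_left d1)
  have eqQ: "Q p = grad h p" if "p \<in> S" for p
  proof -
    have "grad h p = (\<Sum>j\<in>UNIV. (grad h p $ j) *\<^sub>R (axis j 1 :: real^'m))" by (rule vec_sum_basis)
    also have "\<dots> = Q p" unfolding Q_def using gx[OF that] by simp
    finally show ?thesis by simp
  qed
  have "(grad h has_derivative (\<lambda>h. \<Sum>j\<in>UNIV. blinfun_apply (F'' u0 h) (axis j 1) *\<^sub>R (axis j 1 :: real^'m))) (at u0)"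
    by (rule has_derivative_transform_within_open[OF dQ S(1) S(2) eqQ])
  then show ?thesis using S dfx by blast
qed


theorem corollary1:
  fixes f :: "real^'n \<Rightarrow> real^'m \<Rightarrow> real"
    and h :: "real^'m \<Rightarrow> real"
    and U :: "(real^'n) set"
    and y :: "real^'n \<Rightarrow> real^'m"
    and x0 :: "real^'n"
    and i :: 'm
  assumes U_open: "open U"
    and argmin: "\<And>x. x \<in> U \<Longrightarrow> h (y x) = 0 \<and> (\<forall>u. h u = 0 \<longrightarrow> f x (y x) \<le> f x u)"
    and x0U: "x0 \<in> U"
    and f_C2: "C2_near (\<lambda>(x, u). f x u) (x0, y x0)"
    and h_C2: "C2_near h (y x0)"
    and y_cont: "isCont y x0"
    and a_nz: "grad h (y x0) \<noteq> 0"
    and i_nz: "grad h (y x0) $ i \<noteq> 0"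
    and H_inv: "invertible (jacobian (grad (f x0)) (at (y x0))
                 - ((grad (f x0) (y x0) $ i) / (grad h (y x0) $ i)) *\<^sub>R jacobian (grad h) (at (y x0)))"
    and aHa_nz: "grad h (y x0) \<bullet> (matrix_inv (jacobian (grad (f x0)) (at (y x0))
                 - ((grad (f x0) (y x0) $ i) / (grad h (y x0) $ i)) *\<^sub>R jacobian (grad h) (at (y x0)))
                 *v grad h (y x0)) \<noteq> 0"
  shows "let a = grad h (y x0);
             B = jacobian (\<lambda>x. grad (f x) (y x0)) (at x0);
             lam = (grad (f x0) (y x0) $ i) / (grad h (y x0) $ i);
             H = jacobian (grad (f x0)) (at (y x0)) - lam *\<^sub>R jacobian (grad h) (at (y x0));
             Hi = matrix_inv H
         in (y has_derivative (\<lambda>v. ((((1 / (a \<bullet> (Hi *v a))) *\<^sub>R (Hi ** outer a a ** Hi)) - Hi) ** B) *v v))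
              (at x0)"
  proof -
  define y0 where "y0 = y x0"
  obtain Sf Pd where Sf: "open Sf" "(x0, y0) \<in> Sf"
    and dfx: "\<forall>x u. (x,u) \<in> Sf \<longrightarrow> (f x has_derivative (\<lambda>w. grad (f x) u \<bullet> w)) (at u)"
    and dP: "((\<lambda>(x,u). grad (f x) u) has_derivative Pd) (at (x0,y0))"
    using C2_grad_f[OF f_C2] unfolding y0_def by blast
  obtain Sh Hd where Sh: "open Sh" "y0 \<in> Sh" and dh: "\<forall>u\<in>Sh. (h has_derivative (\<lambda>w. grad h u \<bullet> w)) (at u)"
    and dgh: "(grad h has_derivative Hd) (at y0)"
    using C2_grad_h[OF h_C2] unfolding y0_def by blast
  have blP: "bounded_linear Pd" using dP by (rule has_derivative_bounded_linear)
  have blH: "bounded_linear Hd" using dgh by (rule has_derivative_bounded_linear)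
  define a where "a = grad h y0"
  define Hf where "Hf = jacobian (grad (f x0)) (at y0)"
  define Hh where "Hh = jacobian (grad h) (at y0)"
  define B where "B = jacobian (\<lambda>x. grad (f x) y0) (at x0)"
  define lam where "lam = grad (f x0) y0 $ i / a $ i"
  define H where "H = Hf - lam *\<^sub>R Hh"
  define Hi where "Hi = matrix_inv H"
  have ai: "a$i \<noteq> 0" using i_nz by (simp add: a_def y0_def)
  have Hinv: "invertible H" using H_inv by (simp add: H_def Hf_def Hh_def lam_def a_def y0_def)
  have aHa: "a \<bullet> (Hi *v a) \<noteq> 0" using aHa_nz by (simp add: Hi_def H_def Hf_def Hh_def lam_def a_def y0_def)
  have dPu: "(grad (f x0) has_derivative (\<lambda>du. Pd (0, du))) (at y0)"
  proof -
    have "((\<lambda>u. (\<lambda>(x,u). grad (f x) u) (x0, u)) has_derivative (\<lambda>du. Pd (0,du))) (at y0)"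
      using has_derivative_compose[OF has_derivative_Pair[OF has_derivative_const has_derivative_ident] dP] by simp
    then show ?thesis by simp
  qed
  have dPx: "((\<lambda>x. grad (f x) y0) has_derivative (\<lambda>dx. Pd (dx, 0))) (at x0)"
  proof -
    have "((\<lambda>x. (\<lambda>(x,u). grad (f x) u) (x, y0)) has_derivative (\<lambda>dx. Pd (dx,0))) (at x0)"
      using has_derivative_compose[OF has_derivative_Pair[OF has_derivative_ident has_derivative_const] dP] by simp
    then show ?thesis by simp
  qed
  have Hf_app: "Hf *v du = Pd (0, du)" for du
  proof -
    have "(\<lambda>x. matrix (\<lambda>du. Pd (0, du)) *v x) = (\<lambda>du. Pd (0, du))"
      by (rule matrix_vector_mul(3)[OF has_derivative_bounded_linear[OF dPu]])
    then show ?thesis unfolding Hf_def jacobian_def frechet_derivative_at[OF dPu, symmetric] by metis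
  qed
  have B_app: "B *v dx = Pd (dx, 0)" for dx
  proof -
    have "(\<lambda>x. matrix (\<lambda>dx. Pd (dx, 0)) *v x) = (\<lambda>dx. Pd (dx, 0))"
      by (rule matrix_vector_mul(3)[OF has_derivative_bounded_linear[OF dPx]])
    then show ?thesis unfolding B_def jacobian_def frechet_derivative_at[OF dPx, symmetric] by metis
  qed
  have Hh_app: "Hh *v du = Hd du" for du
  proof -
    have "(\<lambda>x. matrix Hd *v x) = Hd"
      by (rule matrix_vector_mul(3)[OF blH])
    then show ?thesis unfolding Hh_def jacobian_def frechet_derivative_at[OF dgh, symmetric] by metis
  qed
  have Pd_split: "Pd (dx, du) = Pd (dx, 0) + Pd (0, du)" for dx du
  proof -
    have "(dx, du) = (dx, 0) + (0, du)" by simp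
    then show ?thesis using linear_add[OF bounded_linear.linear[OF blP]] by metis
  qed
  have H_app: "H *v w = Pd (0, w) - lam *\<^sub>R Hd w" for w
    by (simp add: H_def matrix_vector_mult_diff_rdistrib scaleR_matrix_vector_assoc[symmetric] Hf_app Hh_app)
  have HHi: "H *v (Hi *v w) = w" "Hi *v (H *v w) = w" for w
    using matrix_inv_right[OF Hinv] by (simp_all add: Hi_def matrix_vector_mul_assoc)

  define lf where "lf = (\<lambda>x. grad (f x) (y x) $ i / grad h (y x) $ i)"
  define z where "z = (\<lambda>x. (y x, lf x))"
  have lf0: "lf x0 = lam" by (simp add: lf_def lam_def a_def y0_def)
  have pc: "isCont (\<lambda>x. (x, y x)) x0" by (intro continuous_intros y_cont)
  have Pc: "isCont (\<lambda>(x,u). grad (f x) u) (x0, y x0)"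
    using has_derivative_continuous[OF dP] by (simp add: y0_def)
  have gPc: "isCont (\<lambda>x. grad (f x) (y x)) x0"
    using isCont_o2[OF pc Pc] by simp
  have ghc0: "isCont (grad h) (y x0)" using has_derivative_continuous[OF dgh] by (simp add: y0_def)
  have ghc: "isCont (\<lambda>x. grad h (y x)) x0" using isCont_o2[OF y_cont ghc0] .
  have ghic: "isCont (\<lambda>x. grad h (y x) $ i) x0" using ghc by (intro continuous_intros)
  have zc: "isCont z x0" unfolding z_def lf_def
    using gPc ghc i_nz y_cont by (intro continuous_intros) auto
  have evc: "\<forall>\<^sub>F x in nhds x0. g x \<in> S" if "isCont g x0" "open S" "g x0 \<in> S" for g :: "real^'n \<Rightarrow> 'z::topological_space" and S
    using topological_tendstoD[OF that(1)[unfolded isCont_def] that(2,3)] that(3)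
    by (simp add: eventually_nhds_conv_at)
  have ev1: "\<forall>\<^sub>F x in nhds x0. (x, y x) \<in> Sf" using evc[OF pc Sf(1)] Sf(2) by (simp add: y0_def)
  have ev2: "\<forall>\<^sub>F x in nhds x0. y x \<in> Sh" using evc[OF y_cont Sh(1)] Sh(2) by (simp add: y0_def)
  have ev3: "\<forall>\<^sub>F x in nhds x0. grad h (y x) $ i \<in> - {0}" using evc[OF ghic open_Compl[OF closed_singleton]] i_nz by simp
  have ev4: "\<forall>\<^sub>F x in nhds x0. x \<in> U" using eventually_nhds_in_open[OF U_open x0U] .
  have hcont: "continuous_on Sh h"
    using dh by (metis continuous_at_imp_continuous_on has_derivative_continuous)
  define G where "G = (\<lambda>q::(real^'n) \<times> (real^'m) \<times> real.
     (grad (f (fst q)) (fst (snd q)) - snd (snd q) *\<^sub>R grad h (fst (snd q)), h (fst (snd q))))"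
  have evG: "\<forall>\<^sub>F x in nhds x0. G (x, z x) = 0"
    using ev1 ev2 ev3 ev4
  proof eventually_elim
    case (elim x)
    have am: "h (y x) = 0" "\<forall>u. h u = 0 \<longrightarrow> f x (y x) \<le> f x u" using argmin[OF elim(4)] by auto
    have "grad (f x) (y x) = (grad (f x) (y x) $ i / grad h (y x) $ i) *\<^sub>R grad h (y x)"
      by (rule lagrange[OF dfx[rule_format, OF elim(1)] dh[rule_format, OF elim(2)] am(1) _ Sh(1) elim(2) hcont am(2)])
        (use elim(3) in simp)
    then show ?case by (simp add: G_def z_def lf_def am(1) zero_prod_def)
  qed
  define q0 where "q0 = (x0, z x0)"
  have q0: "fst q0 = x0" "fst (snd q0) = y0" "snd (snd q0) = lam"
    by (simp_all add: q0_def z_def y0_def lf0)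
  define G' where "G' = (\<lambda>d::(real^'n) \<times> (real^'m) \<times> real.
     (Pd (fst d, fst (snd d)) - (lam *\<^sub>R Hd (fst (snd d)) + snd (snd d) *\<^sub>R a), a \<bullet> fst (snd d)))"
  have dG: "(G has_derivative G') (at q0)"
  proof -
    have p1: "((\<lambda>q::(real^'n) \<times> (real^'m) \<times> real. (fst q, fst (snd q))) has_derivative (\<lambda>d. (fst d, fst (snd d)))) (at q0)"
      by (intro has_derivative_Pair has_derivative_fst has_derivative_snd has_derivative_ident)
    have p2: "((\<lambda>q::(real^'n) \<times> (real^'m) \<times> real. fst (snd q)) has_derivative (\<lambda>d. fst (snd d))) (at q0)"
      by (intro has_derivative_fst has_derivative_snd has_derivative_ident)
    have p3: "((\<lambda>q::(real^'n) \<times> (real^'m) \<times> real. snd (snd q)) has_derivative (\<lambda>d. snd (snd d))) (at q0)"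
      by (intro has_derivative_snd has_derivative_ident)
    have dP': "((\<lambda>(x,u). grad (f x) u) has_derivative Pd) (at (fst q0, fst (snd q0)))"
      using dP q0 by simp
    have c1: "((\<lambda>q::(real^'n) \<times> (real^'m) \<times> real. grad (f (fst q)) (fst (snd q))) has_derivative (\<lambda>d. Pd (fst d, fst (snd d)))) (at q0)"
      using has_derivative_compose[OF p1 dP'] by simp
    have dgh': "(grad h has_derivative Hd) (at (fst (snd q0)))" using dgh q0 by simp
    have c2: "((\<lambda>q::(real^'n) \<times> (real^'m) \<times> real. grad h (fst (snd q))) has_derivative (\<lambda>d. Hd (fst (snd d)))) (at q0)"
      using has_derivative_compose[OF p2 dgh'] by simp
    have c3: "((\<lambda>q::(real^'n) \<times> (real^'m) \<times> real. snd (snd q) *\<^sub>R grad h (fst (snd q))) has_derivative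
        (\<lambda>d. lam *\<^sub>R Hd (fst (snd d)) + snd (snd d) *\<^sub>R a)) (at q0)"
      using has_derivative_scaleR[OF p3 c2] q0 by (simp add: a_def)
    have dh0: "(h has_derivative (\<lambda>w. a \<bullet> w)) (at (fst (snd q0)))" using dh Sh(2) q0 by (simp add: a_def)
    have c4: "((\<lambda>q::(real^'n) \<times> (real^'m) \<times> real. h (fst (snd q))) has_derivative (\<lambda>d. a \<bullet> fst (snd d))) (at q0)"
      using has_derivative_compose[OF p2 dh0] by simp
    show ?thesis unfolding G_def G'_def
      by (intro has_derivative_Pair has_derivative_diff c1 c3 c4)
  qed
  define Y where "Y = ((1 / (a \<bullet> (Hi *v a))) *\<^sub>R (Hi ** outer a a ** Hi) - Hi) ** B"
  define lamd where "lamd = (\<lambda>v. (a \<bullet> (Hi *v (B *v v))) / (a \<bullet> (Hi *v a)))"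
  define L where "L = (\<lambda>v. (Y *v v, lamd v))"
  have Y_app: "Y *v v = lamd v *\<^sub>R (Hi *v a) - Hi *v (B *v v)" for v
    by (simp add: Y_def lamd_def matrix_vector_mul_assoc[symmetric] matrix_vector_mult_diff_rdistrib
        scaleR_matrix_vector_assoc[symmetric] outer_mult matrix_vector_mult_scaleR)
  have linL: "linear L"
    unfolding L_def lamd_def
    by (intro linearI) (auto simp: matrix_vector_right_distrib matrix_vector_mult_scaleR inner_add_right
          add_divide_distrib)
  have GL: "G' (v, L v) = 0" for v
  proof -
    have "Pd (v, Y *v v) - (lam *\<^sub>R Hd (Y *v v) + lamd v *\<^sub>R a) = B *v v + H *v (Y *v v) - lamd v *\<^sub>R a"
      unfolding H_app B_app using Pd_split[of v "Y *v v"] by (simp add: algebra_simps)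
    also have "H *v (Y *v v) = lamd v *\<^sub>R a - B *v v"
      by (simp add: Y_app matrix_vector_mult_diff_distrib matrix_vector_mult_scaleR HHi)
    finally have 1: "Pd (v, Y *v v) - (lam *\<^sub>R Hd (Y *v v) + lamd v *\<^sub>R a) = 0" by simp
    have 2: "a \<bullet> (Y *v v) = 0"
      using aHa by (simp add: Y_app lamd_def inner_diff_right)
    show ?thesis using 1 2 by (simp add: G'_def L_def zero_prod_def)
  qed
  have inj: "w = 0" if w: "G' (0, w) = 0" for w
  proof -
    obtain du dm where wd: "w = (du, dm)" by fastforce
    have e1: "Pd (0, du) - (lam *\<^sub>R Hd du + dm *\<^sub>R a) = 0" and e2: "a \<bullet> du = 0"
      using w by (simp_all add: G'_def wd zero_prod_def)
    have "H *v du = dm *\<^sub>R a" using e1 by (simp add: H_app algebra_simps)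
    then have "Hi *v (H *v du) = dm *\<^sub>R (Hi *v a)" by (simp add: matrix_vector_mult_scaleR)
    then have du: "du = dm *\<^sub>R (Hi *v a)" by (simp add: HHi)
    then have "dm * (a \<bullet> (Hi *v a)) = 0" using e2 by simp
    then have "dm = 0" using aHa by simp
    then show ?thesis using du wd by (simp add: zero_prod_def)
  qed
  have dG0: "(G has_derivative G') (at (x0, z x0))" using dG by (simp add: q0_def)
  have dz: "(z has_derivative L) (at x0)"
    by (rule implicit_diff[OF dG0 evG zc linL GL inj])
  have "((\<lambda>x. fst (z x)) has_derivative (\<lambda>v. fst (L v))) (at x0)"
    by (rule has_derivative_fst[OF dz])
  then have final: "(y has_derivative (\<lambda>v. Y *v v)) (at x0)" by (simp add: z_def L_def)
  show ?thesis unfolding Let_def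
    using final unfolding Y_def Hi_def H_def lam_def Hf_def Hh_def B_def a_def y0_def .
qed

end
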